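(* Let $q$ be a power of $2$, $a\in\mathbb{F}_q$, and $n\ge1$ an integer with $\gcd(n+1,q)=1$. Then $n$ is even, and the code $C_n(a)$ is LCD if and only if $$a\notin\{-1+\theta^i+\theta^{-i} : 1\le i\le n/2\},$$ where $\theta\in\overline{\mathbb{F}}_q$ is a primitive $(n+1)$-th root of unity.
   Context: For $a\in\mathbb{F}_q$ and $n \ge 1$, $T_n(a)$ denotes the $n\times n$ symmetric tridiagonal Toeplitz matrix over $\mathbb{F}_q$ with all diagonal entries equal to $a$, all entries on the first super- and sub-diagonals equal to $1$, and all other entries $0$. $C_n(a)$ is the $[2n,n]$ linear code over $\mathbb{F}_q$ with generator matrix $[I_n \mid T_n(a)]$. A linear code $C$ is LCD (linear complementary dual) if $C\cap C^\perp=\{0\}$, where $C^\perp$ is the dual with respect to the standard Euclidean inner product. *)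

theory Defs
  imports "HOL-Algebra.Algebraic_Closure_Type"
begin

text \<open>Vectors of length m over a field are modelled as functions nat => 'a
  vanishing at all indices >= m; matrices as functions nat => nat => 'a.\<close>

definition vecs :: "nat \<Rightarrow> (nat \<Rightarrow> 'a::zero) set" where
  "vecs m = {x. \<forall>i\<ge>m. x i = 0}"

definition tridiag :: "nat \<Rightarrow> 'a::field \<Rightarrow> nat \<Rightarrow> nat \<Rightarrow> 'a" where
  "tridiag n a i j =
     (if i < n \<and> j < n then
        (if i = j then a else if i = j + 1 \<or> j = i + 1 then 1 else 0)
      else 0)"

definition genmat :: "nat \<Rightarrow> 'a::field \<Rightarrow> nat \<Rightarrow> nat \<Rightarrow> 'a" where
  "genmat n a i j =
     (if i < n \<and> j < 2 * n then
        (if j < n then (if i = j then 1 else 0) else tridiag n a i (j - n))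
      else 0)"

definition row_code :: "nat \<Rightarrow> nat \<Rightarrow> (nat \<Rightarrow> nat \<Rightarrow> 'a::field) \<Rightarrow> (nat \<Rightarrow> 'a) set" where
  "row_code k m G = {x. \<exists>u \<in> vecs k. x = (\<lambda>j. if j < m then (\<Sum>i<k. u i * G i j) else 0)}"

definition Ccode :: "nat \<Rightarrow> 'a::field \<Rightarrow> (nat \<Rightarrow> 'a) set" where
  "Ccode n a = row_code n (2 * n) (genmat n a)"

definition dual_code :: "nat \<Rightarrow> (nat \<Rightarrow> 'a::field) set \<Rightarrow> (nat \<Rightarrow> 'a) set" where
  "dual_code m C = {y \<in> vecs m. \<forall>x\<in>C. (\<Sum>i<m. x i * y i) = 0}"

definition is_LCD :: "nat \<Rightarrow> (nat \<Rightarrow> 'a::field) set \<Rightarrow> bool" where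
  "is_LCD m C \<longleftrightarrow> C \<inter> dual_code m C = {(\<lambda>_. 0)}"

definition primitive_root_of_unity :: "nat \<Rightarrow> 'a::field \<Rightarrow> bool" where
  "primitive_root_of_unity k \<theta> \<longleftrightarrow> \<theta> ^ k = 1 \<and> (\<forall>j. 0 < j \<and> j < k \<longrightarrow> \<theta> ^ j \<noteq> 1)"

end

theory Submission
  imports Defs "HOL-Number_Theory.Residues"
begin


lemma char2:
  assumes "\<exists>m. card (UNIV::'a::{finite,field} set) = 2^m" shows "(1::'a) + 1 = 0"
proof -
  obtain m where m: "card (UNIV::'a set) = 2^m" using assms by blast
  have pos: "CHAR('a) > 0" by (simp add: finite_imp_CHAR_pos)
  have pr: "prime CHAR('a)" using prime_CHAR_semidom pos by blast
  have "CHAR('a) dvd 2^m" using CHAR_dvd_CARD m by metis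
  hence "CHAR('a) dvd 2" using pr prime_dvd_power by blast
  hence "CHAR('a) \<le> 2" by (rule dvd_imp_le) auto
  moreover have "CHAR('a) \<ge> 2" using pr prime_ge_2_nat by blast
  ultimately have "CHAR('a) = 2" by simp
  hence "of_nat 2 = (0::'a)" by (metis of_nat_CHAR)
  thus ?thesis by simp
qed

lemma c2_neg: assumes "(1::'b::field) + 1 = 0" shows "- (x::'b) = x"
proof -
  have "x + x = (1 + 1) * x" by (simp add: algebra_simps)
  also have "\<dots> = 0" using assms by simp
  finally show ?thesis by (simp add: add_eq_0_iff)
qed

lemma c2_self: assumes "(1::'b::field) + 1 = 0" shows "(x::'b) + x = 0"
  using c2_neg[OF assms, of x] by (simp add: add_eq_0_iff)

lemma c2_eq: assumes "(1::'b::field) + 1 = 0" "(x::'b) + y = 0" shows "y = x"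
proof -
  have "y = - x" using assms(2) by (simp add: add_eq_0_iff)
  thus ?thesis using c2_neg[OF assms(1)] by simp
qed

lemma n_even:
  assumes "\<exists>m. card (UNIV::'a::{finite,field} set) = 2^m"
    and "gcd (n + 1) (card (UNIV :: 'a set)) = 1"
  shows "even n"
proof -
  obtain m where m: "card (UNIV::'a set) = 2^m" using assms by blast
  have "card (UNIV::'a set) \<ge> 2"
  proof -
    have "{0::'a, 1} \<subseteq> UNIV" by simp
    hence "card {0::'a,1} \<le> card (UNIV::'a set)" by (intro card_mono) auto
    thus ?thesis by simp
  qed
  hence "m \<noteq> 0" using m by (cases m) auto
  hence "2 dvd card (UNIV::'a set)" using m by (cases m) auto
  show ?thesis
  proof (rule ccontr)
    assume "odd n"
    hence "2 dvd n + 1" by simp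
    hence "2 dvd gcd (n+1) (card (UNIV::'a set))" using \<open>2 dvd card (UNIV::'a set)\<close> by simp
    thus False using assms(2) by (metis odd_one)
  qed
qed

definition Tv :: "nat \<Rightarrow> 'a::field \<Rightarrow> (nat\<Rightarrow>'a) \<Rightarrow> nat \<Rightarrow> 'a" where
  "Tv n a u j = (\<Sum>i<n. u i * tridiag n a i j)"

definition enc :: "nat \<Rightarrow> 'a::field \<Rightarrow> (nat\<Rightarrow>'a) \<Rightarrow> nat \<Rightarrow> 'a" where
  "enc n a u j = (if j < n then u j else if j < 2*n then Tv n a u (j-n) else 0)"

lemma Ccode_eq: "Ccode n a = enc n a ` vecs n"
proof -
  have "(\<lambda>j. if j < 2*n then (\<Sum>i<n. u i * genmat n a i j) else 0) = enc n a u" for u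
  proof
    fix j
    show "(if j < 2*n then (\<Sum>i<n. u i * genmat n a i j) else 0) = enc n a u j"
    proof (cases "j < n")
      case True
      have "(\<Sum>i<n. u i * genmat n a i j) = (\<Sum>i<n. if i = j then u j else 0)"
        using True by (intro sum.cong) (auto simp: genmat_def)
      also have "\<dots> = u j" using True by simp
      finally show ?thesis using True by (simp add: enc_def)
    next
      case False
      have "(\<Sum>i<n. u i * genmat n a i j) = (\<Sum>i<n. u i * tridiag n a i (j-n))" if "j < 2*n"
        using False that by (intro sum.cong) (auto simp: genmat_def)
      thus ?thesis using False by (simp add: enc_def Tv_def)
    qed
  qed
  thus ?thesis unfolding Ccode_def row_code_def by auto
qed

lemma tridiag_sym: "tridiag n a i j = tridiag n a j i"
  by (auto simp: tridiag_def)

lemma sum_split_add: "(\<Sum>i<m+(k::nat). f i) = (\<Sum>i<m. f i) + (\<Sum>i<k. f (m+i))"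
  by (induction k) (auto simp: add.assoc)

lemma Tv_zero_high: "j \<ge> n \<Longrightarrow> Tv n a u j = 0"
  by (simp add: Tv_def tridiag_def)

lemma inner_enc:
  "(\<Sum>i<2*n. enc n a v i * enc n a u i) = (\<Sum>i<n. v i * (u i + Tv n a (Tv n a u) i))"
proof -
  have "(\<Sum>i<2*n. enc n a v i * enc n a u i) = (\<Sum>i<n+n. enc n a v i * enc n a u i)"
    by (simp add: mult_2)
  also have "\<dots> = (\<Sum>i<n. v i * u i) + (\<Sum>i<n. Tv n a v i * Tv n a u i)"
    by (simp add: sum_split_add enc_def)
  also have "(\<Sum>i<n. Tv n a v i * Tv n a u i) = (\<Sum>j<n. \<Sum>i<n. v i * tridiag n a i j * Tv n a u j)"
    by (simp add: Tv_def sum_distrib_right)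
  also have "\<dots> = (\<Sum>i<n. \<Sum>j<n. v i * (Tv n a u j * tridiag n a j i))"
    by (subst sum.swap) (simp add: tridiag_sym mult_ac)
  also have "\<dots> = (\<Sum>i<n. v i * Tv n a (Tv n a u) i)"
    by (simp add: Tv_def sum_distrib_left)
  finally show ?thesis by (simp add: sum.distrib distrib_left)
qed

lemma Tv_zero_fun: "Tv n a (\<lambda>_. 0) = (\<lambda>_. 0)"
  by (auto simp: Tv_def)

lemma enc_zero_iff: "u \<in> vecs n \<Longrightarrow> enc n a u = (\<lambda>_. 0) \<longleftrightarrow> u = (\<lambda>_. 0)"
proof
  assume u: "u \<in> vecs n" and e: "enc n a u = (\<lambda>_. 0)"
  show "u = (\<lambda>_. 0)"
  proof
    fix j show "u j = 0"
    proof (cases "j < n")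
      case True thus ?thesis using fun_cong[OF e, of j] by (simp add: enc_def)
    next
      case False thus ?thesis using u by (simp add: vecs_def)
    qed
  qed
next
  assume "u = (\<lambda>_. 0)" thus "enc n a u = (\<lambda>_. 0)"
    by (auto simp: enc_def Tv_zero_fun)
qed

lemma enc_vecs: "enc n a u \<in> vecs (2*n)"
  by (simp add: vecs_def enc_def)

lemma LCD_iff:
  "is_LCD (2*n) (Ccode n a) \<longleftrightarrow>
     (\<forall>u\<in>vecs n. (\<forall>i<n. u i + Tv n a (Tv n a u) i = 0) \<longrightarrow> u = (\<lambda>_. 0))"
  (is "?L \<longleftrightarrow> ?R")
proof -
  have dual: "enc n a u \<in> dual_code (2*n) (Ccode n a) \<longleftrightarrow> (\<forall>i<n. u i + Tv n a (Tv n a u) i = 0)"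
    for u
  proof
    assume d: "enc n a u \<in> dual_code (2*n) (Ccode n a)"
    show "\<forall>i<n. u i + Tv n a (Tv n a u) i = 0"
    proof (intro allI impI)
      fix i assume i: "i < n"
      define v where "v = (\<lambda>k. if k = i then (1::'a) else 0)"
      have "v \<in> vecs n" using i by (auto simp: v_def vecs_def)
      hence "enc n a v \<in> Ccode n a" by (simp add: Ccode_eq)
      hence "(\<Sum>k<2*n. enc n a v k * enc n a u k) = 0" using d by (simp add: dual_code_def)
      hence "(\<Sum>k<n. v k * (u k + Tv n a (Tv n a u) k)) = 0" by (simp add: inner_enc)
      moreover have "(\<Sum>k<n. v k * (u k + Tv n a (Tv n a u) k)) = (\<Sum>k<n. if k = i then u k + Tv n a (Tv n a u) k else 0)"
        by (intro sum.cong) (auto simp: v_def)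
      ultimately show "u i + Tv n a (Tv n a u) i = 0" using i by simp
    qed
  next
    assume h: "\<forall>i<n. u i + Tv n a (Tv n a u) i = 0"
    show "enc n a u \<in> dual_code (2*n) (Ccode n a)"
      unfolding dual_code_def using h by (auto simp: enc_vecs Ccode_eq inner_enc)
  qed
  show ?thesis
  proof
    assume L: ?L
    show ?R
    proof (intro ballI impI)
      fix u assume u: "u \<in> vecs n" and h: "\<forall>i<n. u i + Tv n a (Tv n a u) i = 0"
      have "enc n a u \<in> Ccode n a \<inter> dual_code (2*n) (Ccode n a)"
        using u h dual by (simp add: Ccode_eq)
      hence "enc n a u \<in> {(\<lambda>_. 0)}" using L unfolding is_LCD_def by blast
      hence "enc n a u = (\<lambda>_. 0)" by simp
      thus "u = (\<lambda>_. 0)" using enc_zero_iff[OF u] by simp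
    qed
  next
    assume R: ?R
    have 0: "(\<lambda>_. 0) \<in> vecs n" by (simp add: vecs_def)
    show ?L unfolding is_LCD_def
    proof
      show "Ccode n a \<inter> dual_code (2 * n) (Ccode n a) \<subseteq> {\<lambda>_. 0}"
      proof
        fix x assume "x \<in> Ccode n a \<inter> dual_code (2 * n) (Ccode n a)"
        then obtain u where u: "u \<in> vecs n" "x = enc n a u"
          and d: "enc n a u \<in> dual_code (2 * n) (Ccode n a)" by (auto simp: Ccode_eq)
        have "u = (\<lambda>_. 0)" using R u d dual by blast
        thus "x \<in> {\<lambda>_. 0}" using u enc_zero_iff by auto
      qed
    next
      have e0: "enc n a (\<lambda>_. 0) = (\<lambda>_. 0)" using enc_zero_iff[OF 0] by simp
      have "enc n a (\<lambda>_. 0) \<in> dual_code (2 * n) (Ccode n a)" using dual[of "\<lambda>_. 0"]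
        by (simp add: Tv_zero_fun)
      thus "{\<lambda>_. 0} \<subseteq> Ccode n a \<inter> dual_code (2 * n) (Ccode n a)"
        using 0 e0 by (auto simp: Ccode_eq image_iff intro!: bexI[of _ "\<lambda>_. 0"])
    qed
  qed
qed


definition Sv :: "nat \<Rightarrow> 'a::field \<Rightarrow> (nat\<Rightarrow>'a) \<Rightarrow> nat \<Rightarrow> 'a" where
  "Sv n a u = (\<lambda>i. u i + Tv n a u i)"

lemma Tv_add: "Tv n a (\<lambda>i. u i + w i) j = Tv n a u j + Tv n a w j"
  by (simp add: Tv_def sum.distrib distrib_right)

lemma SS: fixes a :: "'a::field" assumes "(1::'a) + 1 = 0"
  shows "Sv n a (Sv n a u) i = u i + Tv n a (Tv n a u) i"
proof -
  have "Sv n a (Sv n a u) i = u i + (Tv n a u i + Tv n a u i) + Tv n a (Tv n a u) i"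
    by (simp add: Sv_def Tv_add algebra_simps)
  moreover have "Tv n a u i + Tv n a u i = 0" by (rule c2_self[OF assms])
  ultimately show ?thesis by simp
qed

lemma Sv_vecs: "u \<in> vecs n \<Longrightarrow> Sv n a u \<in> vecs n"
  by (simp add: vecs_def Sv_def Tv_zero_high)

lemma vecs_low_zero: "u \<in> vecs n \<Longrightarrow> (\<forall>i<n. u i = 0) \<Longrightarrow> u = (\<lambda>_. 0)"
  by (rule ext, simp add: vecs_def, metis not_less)

lemma Sv_zero: "Sv n a (\<lambda>_. 0) = (\<lambda>_. 0)"
  by (simp add: Sv_def Tv_zero_fun)

lemma LCD_iff2: fixes a :: "'a::field" assumes c: "(1::'a) + 1 = 0"
  shows "is_LCD (2*n) (Ccode n a) \<longleftrightarrow>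
     (\<forall>u\<in>vecs n. (\<forall>i<n. Sv n a u i = 0) \<longrightarrow> u = (\<lambda>_. 0))"
proof -
  have e: "(\<forall>u\<in>vecs n. (\<forall>i<n. u i + Tv n a (Tv n a u) i = 0) \<longrightarrow> u = (\<lambda>_. 0)) \<longleftrightarrow>
        (\<forall>u\<in>vecs n. (\<forall>i<n. Sv n a (Sv n a u) i = 0) \<longrightarrow> u = (\<lambda>_. 0))"
    by (simp only: SS[OF c])
  have "(\<forall>u\<in>vecs n. (\<forall>i<n. Sv n a (Sv n a u) i = 0) \<longrightarrow> u = (\<lambda>_. 0)) \<longleftrightarrow>
     (\<forall>u\<in>vecs n. (\<forall>i<n. Sv n a u i = 0) \<longrightarrow> u = (\<lambda>_. 0))"
  proof
    assume A: "\<forall>u\<in>vecs n. (\<forall>i<n. Sv n a (Sv n a u) i = 0) \<longrightarrow> u = (\<lambda>_. 0)"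
    show "\<forall>u\<in>vecs n. (\<forall>i<n. Sv n a u i = 0) \<longrightarrow> u = (\<lambda>_. 0)"
    proof (intro ballI impI)
      fix u assume u: "u \<in> vecs n" and h: "\<forall>i<n. Sv n a u i = 0"
      have "Sv n a u = (\<lambda>_. 0)" using vecs_low_zero[OF Sv_vecs[OF u] h] .
      hence "\<forall>i<n. Sv n a (Sv n a u) i = 0" by (simp add: Sv_zero)
      thus "u = (\<lambda>_. 0)" using A u by blast
    qed
  next
    assume A: "\<forall>u\<in>vecs n. (\<forall>i<n. Sv n a u i = 0) \<longrightarrow> u = (\<lambda>_. 0)"
    show "\<forall>u\<in>vecs n. (\<forall>i<n. Sv n a (Sv n a u) i = 0) \<longrightarrow> u = (\<lambda>_. 0)"
    proof (intro ballI impI)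
      fix u assume u: "u \<in> vecs n" and h: "\<forall>i<n. Sv n a (Sv n a u) i = 0"
      have "Sv n a u = (\<lambda>_. 0)" using A Sv_vecs[OF u] h by blast
      hence "\<forall>i<n. Sv n a u i = 0" by simp
      thus "u = (\<lambda>_. 0)" using A u by blast
    qed
  qed
  thus ?thesis using e LCD_iff by blast
qed

lemma tridiag_split: "j < n \<Longrightarrow> i < n \<Longrightarrow> tridiag n a j i =
   (if j = i then a else 0) + (if Suc j = i then 1 else 0) + (if j = Suc i then 1 else 0)"
  by (auto simp: tridiag_def)

lemma Sv_formula: assumes u: "u \<in> vecs n" and i: "i < n"
  shows "Sv n a u i = (a + 1) * u i + (if i = 0 then 0 else u (i - 1)) + u (Suc i)"
proof -
  have "Tv n a u i = (\<Sum>j<n. (if j = i then u j * a else 0) + (if Suc j = i then u j else 0)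
        + (if j = Suc i then u j else 0))"
    unfolding Tv_def
  proof (intro sum.cong refl)
    fix j assume "j \<in> {..<n}"
    hence "j < n" by simp
    show "u j * tridiag n a j i = (if j = i then u j * a else 0) + (if Suc j = i then u j else 0)
        + (if j = Suc i then u j else 0)"
      unfolding tridiag_split[OF \<open>j < n\<close> i] by (simp add: distrib_left)
  qed
  also have "\<dots> = (\<Sum>j<n. if j = i then u j * a else 0) + (\<Sum>j<n. if Suc j = i then u j else 0)
        + (\<Sum>j<n. if j = Suc i then u j else 0)"
    by (simp only: sum.distrib)
  also have "(\<Sum>j<n. if j = i then u j * a else 0) = u i * a" using i by simp
  also have "(\<Sum>j<n. if j = Suc i then u j else 0) = u (Suc i)"
    using u i by (auto simp: vecs_def)
  also have "(\<Sum>j<n. if Suc j = i then u j else 0) = (if i = 0 then 0 else u (i - 1))"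
  proof (cases i)
    case 0 thus ?thesis by simp
  next
    case (Suc k)
    have "(\<Sum>j<n. if Suc j = i then u j else 0) = (\<Sum>j<n. if j = k then u j else 0)"
      using Suc by (intro sum.cong) auto
    thus ?thesis using Suc i by simp
  qed
  finally show ?thesis by (simp add: Sv_def algebra_simps)
qed

fun sq :: "'b::field \<Rightarrow> nat \<Rightarrow> 'b" where
  "sq b 0 = 0" | "sq b (Suc 0) = 1" | "sq b (Suc (Suc k)) = b * sq b (Suc k) + sq b k"

lemma kern:
  fixes b :: "'a::field"
  assumes c: "(1::'a) + 1 = 0" and n: "n \<ge> 1"
  shows "(\<exists>u\<in>vecs n. u \<noteq> (\<lambda>_. 0) \<and>
           (\<forall>i<n. b * u i + (if i = 0 then 0 else u (i - 1)) + u (Suc i) = 0))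
         \<longleftrightarrow> sq b (Suc n) = 0"
proof
  assume "\<exists>u\<in>vecs n. u \<noteq> (\<lambda>_. 0) \<and>
           (\<forall>i<n. b * u i + (if i = 0 then 0 else u (i - 1)) + u (Suc i) = 0)"
  then obtain u where u: "u \<in> vecs n" and nz: "u \<noteq> (\<lambda>_. 0)"
    and E: "\<And>i. i < n \<Longrightarrow> b * u i + (if i = 0 then 0 else u (i - 1)) + u (Suc i) = 0" by blast
  have I: "Suc k \<le> n \<longrightarrow> u k = u 0 * sq b (Suc k) \<and> u (Suc k) = u 0 * sq b (Suc (Suc k))" for k
  proof (induction k)
    case 0
    show ?case
    proof
      assume "Suc 0 \<le> n"
      hence "b * u 0 + u (Suc 0) = 0" using E[of 0] by simp
      hence "u (Suc 0) = b * u 0" by (rule c2_eq[OF c])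
      thus "u 0 = u 0 * sq b (Suc 0) \<and> u (Suc 0) = u 0 * sq b (Suc (Suc 0))" by simp
    qed
  next
    case (Suc k)
    show ?case
    proof
      assume k: "Suc (Suc k) \<le> n"
      with Suc have ih: "u k = u 0 * sq b (Suc k)" "u (Suc k) = u 0 * sq b (Suc (Suc k))" by auto
      have "b * u (Suc k) + u k + u (Suc (Suc k)) = 0" using E[of "Suc k"] k by simp
      hence "(b * u (Suc k) + u k) + u (Suc (Suc k)) = 0" by (simp add: add.assoc)
      hence "u (Suc (Suc k)) = b * u (Suc k) + u k" by (rule c2_eq[OF c])
      also have "\<dots> = u 0 * sq b (Suc (Suc (Suc k)))" by (simp add: ih algebra_simps)
      finally show "u (Suc k) = u 0 * sq b (Suc (Suc k)) \<and> u (Suc (Suc k)) = u 0 * sq b (Suc (Suc (Suc k)))"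
        using ih by simp
    qed
  qed
  show "sq b (Suc n) = 0"
  proof (rule ccontr)
    assume s: "sq b (Suc n) \<noteq> 0"
    obtain m where m: "n = Suc m" using n by (cases n) auto
    have "u n = u 0 * sq b (Suc n)" using I[of m] m by simp
    moreover have "u n = 0" using u by (simp add: vecs_def)
    ultimately have u0: "u 0 = 0" using s by simp
    have "u k = 0" for k
    proof (cases "k < n")
      case True thus ?thesis using I[of k] u0 by simp
    next
      case False thus ?thesis using u by (simp add: vecs_def)
    qed
    thus False using nz by auto
  qed
next
  assume s: "sq b (Suc n) = 0"
  define u where "u = (\<lambda>k. if k < n then sq b (Suc k) else 0)"
  have uk: "u k = sq b (Suc k)" if "k \<le> n" for k
    using that s by (auto simp: u_def)
  have "u \<in> vecs n" by (simp add: u_def vecs_def)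
  moreover have "u \<noteq> (\<lambda>_. 0)"
  proof
    assume "u = (\<lambda>_. 0)"
    hence "u 0 = 0" by simp
    thus False using n by (simp add: u_def)
  qed
  moreover have "\<forall>i<n. b * u i + (if i = 0 then 0 else u (i - 1)) + u (Suc i) = 0"
  proof (intro allI impI)
    fix i assume i: "i < n"
    show "b * u i + (if i = 0 then 0 else u (i - 1)) + u (Suc i) = 0"
    proof (cases i)
      case 0
      thus ?thesis using i uk[of 0] uk[of 1] c2_self[OF c, of b] by simp
    next
      case (Suc j)
      have "b * u i + (if i = 0 then 0 else u (i - 1)) + u (Suc i)
          = (b * sq b (Suc (Suc j)) + sq b (Suc j)) + (b * sq b (Suc (Suc j)) + sq b (Suc j))"
        using Suc i uk[of i] uk[of j] uk[of "Suc i"] by simp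
      also have "\<dots> = 0" by (rule c2_self[OF c])
      finally show ?thesis .
    qed
  qed
  ultimately show "\<exists>u\<in>vecs n. u \<noteq> (\<lambda>_. 0) \<and>
           (\<forall>i<n. b * u i + (if i = 0 then 0 else u (i - 1)) + u (Suc i) = 0)" by blast
qed

lemma LCD_sq:
  fixes a :: "'a::field"
  assumes c: "(1::'a) + 1 = 0" and n: "n \<ge> 1"
  shows "is_LCD (2*n) (Ccode n a) \<longleftrightarrow> sq (a + 1) (Suc n) \<noteq> 0"
proof -
  have "is_LCD (2*n) (Ccode n a) \<longleftrightarrow> \<not> (\<exists>u\<in>vecs n. u \<noteq> (\<lambda>_. 0) \<and> (\<forall>i<n. Sv n a u i = 0))"
    using LCD_iff2[OF c] by blast
  also have "(\<exists>u\<in>vecs n. u \<noteq> (\<lambda>_. 0) \<and> (\<forall>i<n. Sv n a u i = 0)) \<longleftrightarrow>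
     (\<exists>u\<in>vecs n. u \<noteq> (\<lambda>_. 0) \<and>
           (\<forall>i<n. (a+1) * u i + (if i = 0 then 0 else u (i - 1)) + u (Suc i) = 0))"
    using Sv_formula by (metis (no_types, lifting))
  also have "\<dots> \<longleftrightarrow> sq (a + 1) (Suc n) = 0" by (rule kern[OF c n])
  finally show ?thesis .
qed

lemma to_ac_sq: "to_ac (sq b k) = sq (to_ac b) k"
  by (induction b k rule: sq.induct) auto

lemma sq_closed:
  fixes x y :: "'b::field"
  assumes c: "(1::'b) + 1 = 0" and xy: "x * y = 1"
  shows "sq (x + y) k * (x + y) = x ^ k + y ^ k"
proof (induction "x+y" k rule: sq.induct)
  case 1 thus ?case using c by simp
next
  case 2 thus ?case by simp
next
  case (3 k)
  have e1: "x * y ^ Suc k = y ^ k" using xy by (simp add: mult.assoc[symmetric])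
  have e2: "y * x ^ Suc k = x ^ k" using xy by (simp add: mult.assoc[symmetric] mult.commute)
  have "sq (x + y) (Suc (Suc k)) * (x + y) = (x + y) * (sq (x+y) (Suc k) * (x + y)) + sq (x+y) k * (x+y)"
    by (simp add: algebra_simps)
  also have "\<dots> = (x + y) * (x ^ Suc k + y ^ Suc k) + (x ^ k + y ^ k)"
    using 3 by simp
  also have "\<dots> = x ^ Suc (Suc k) + y ^ Suc (Suc k) + (x * y ^ Suc k + y * x ^ Suc k) + (x ^ k + y ^ k)"
    by (simp add: algebra_simps)
  also have "\<dots> = x ^ Suc (Suc k) + y ^ Suc (Suc k) + ((x ^ k + y ^ k) + (x ^ k + y ^ k))"
    by (simp only: e1 e2) (simp add: add_ac)
  also have "\<dots> = x ^ Suc (Suc k) + y ^ Suc (Suc k)" by (simp only: c2_self[OF c] add_0_right)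
  finally show ?case .
qed

lemma sq_zero_odd: "sq (0::'b::field) (Suc (2 * j)) = 1"
  by (induction j) auto

lemma prim_dvd:
  fixes \<theta> :: "'b::field"
  assumes p: "primitive_root_of_unity k \<theta>" and k: "k > 0" and m: "\<theta> ^ m = 1"
  shows "k dvd m"
proof (rule ccontr)
  assume "\<not> k dvd m"
  hence r1: "0 < m mod k" by (simp add: dvd_eq_mod_eq_0)
  have r2: "m mod k < k" using k by simp
  note r = r1 r2
  have "\<theta> ^ m = \<theta> ^ (k * (m div k) + m mod k)" by simp
  also have "\<dots> = (\<theta> ^ k) ^ (m div k) * \<theta> ^ (m mod k)"
    by (simp only: power_add power_mult)
  finally have "\<theta> ^ m = (\<theta> ^ k) ^ (m div k) * \<theta> ^ (m mod k)" .
  hence "\<theta> ^ (m mod k) = 1" using p m by (simp add: primitive_root_of_unity_def)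
  thus False using p r by (simp add: primitive_root_of_unity_def)
qed

lemma prim_nz: "primitive_root_of_unity k (\<theta>::'b::field) \<Longrightarrow> k > 0 \<Longrightarrow> \<theta> \<noteq> 0"
  by (cases k) (auto simp: primitive_root_of_unity_def)

lemma prim_inj:
  fixes \<theta> :: "'b::field"
  assumes p: "primitive_root_of_unity k \<theta>" and k: "k > 0"
  shows "inj_on (\<lambda>j. \<theta> ^ j) {..<k}"
proof -
  have nz: "\<theta> \<noteq> 0" using prim_nz[OF p k] .
  have *: False if "i < j" "j < k" "\<theta> ^ i = \<theta> ^ j" for i j
  proof -
    have "\<theta> ^ (i + (j - i)) = \<theta> ^ i * \<theta> ^ (j - i)" by (rule power_add)
    moreover have "i + (j - i) = j" using that(1) by simp
    ultimately have "\<theta> ^ j = \<theta> ^ i * \<theta> ^ (j - i)" by simp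
    hence "\<theta> ^ (j - i) = 1" using that nz by simp
    thus False using p that by (simp add: primitive_root_of_unity_def)
  qed
  show ?thesis
  proof (rule inj_onI)
    fix i j assume "i \<in> {..<k}" "j \<in> {..<k}" "\<theta> ^ i = \<theta> ^ j"
    thus "i = j" using *[of i j] *[of j i] by (cases i j rule: linorder_cases) auto
  qed
qed

lemma prim_roots:
  fixes \<theta> x :: "'b::field"
  assumes p: "primitive_root_of_unity k \<theta>" and k: "k > 0" and x: "x ^ k = 1"
  shows "\<exists>j<k. x = \<theta> ^ j"
proof -
  define q :: "'b poly" where "q = [:-1:] + monom 1 k"
  have dq: "degree q = k" unfolding q_def using k
    by (subst degree_add_eq_right) (auto simp: degree_monom_eq)
  hence q0: "q \<noteq> 0" using k by auto
  have pq: "poly q z = z ^ k - 1" for z by (simp add: q_def poly_monom)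
  define R where "R = {z. poly q z = 0}"
  have fR: "finite R" unfolding R_def using q0 by (rule poly_roots_finite)
  have cR: "card R \<le> k" unfolding R_def using card_poly_roots_bound[OF q0] dq by simp
  define P where "P = (\<lambda>j. \<theta> ^ j) ` {..<k}"
  have PR: "P \<subseteq> R"
  proof
    fix z assume "z \<in> P"
    then obtain j where "z = \<theta> ^ j" by (auto simp: P_def)
    hence "z ^ k = (\<theta> ^ k) ^ j" by (simp add: power_mult[symmetric] mult.commute)
    thus "z \<in> R" using p by (simp add: R_def pq primitive_root_of_unity_def)
  qed
  have cP: "card P = k" unfolding P_def using card_image[OF prim_inj[OF p k]] by simp
  have "P = R" using card_seteq[OF fR PR] cR cP by simp
  moreover have "x \<in> R" using x by (simp add: R_def pq)
  ultimately show ?thesis by (auto simp: P_def)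
qed

lemma key:
  fixes \<theta> B :: "'b::alg_closed_field"
  assumes c: "(1::'b) + 1 = 0" and p: "primitive_root_of_unity (n + 1) \<theta>"
    and ev: "even n" and n: "n \<ge> 1"
  shows "sq B (Suc n) = 0 \<longleftrightarrow> (\<exists>i. 1 \<le> i \<and> i \<le> n div 2 \<and> B = \<theta> ^ i + inverse \<theta> ^ i)"
proof -
  define f :: "nat \<Rightarrow> 'b" where "f = (\<lambda>k. if k = 1 then B else 1)"
  obtain x where x0: "(\<Sum>k\<le>2. f k * x ^ k) = 0"
    using alg_closed[of 2 f] by (auto simp: f_def)
  have "(\<Sum>k\<le>2. f k * x ^ k) = 1 + B * x + x * x"
    by (simp add: f_def numeral_2_eq_2 power2_eq_square)
  with x0 have x: "1 + B * x + x * x = 0" by simp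
  have xnz: "x \<noteq> 0" using x by auto
  define y where "y = inverse x"
  have xy: "x * y = 1" using xnz by (simp add: y_def)
  have "y * (1 + B * x + x * x) = 0" using x by simp
  hence "(x + y) + B = 0" using xy by (simp add: algebra_simps mult.assoc[symmetric])
  hence Bxy: "B = x + y" by (rule c2_eq[OF c])
  have np: "n + 1 > 0" by simp
  have tnz: "\<theta> \<noteq> 0" using prim_nz[OF p np] .
  have t1: "\<theta> ^ (n+1) = 1" using p by (simp add: primitive_root_of_unity_def)
  have nzB: "\<theta> ^ i + inverse \<theta> ^ i \<noteq> 0" if i: "1 \<le> i" "i \<le> n div 2" for i
  proof
    assume "\<theta> ^ i + inverse \<theta> ^ i = 0"
    hence "inverse \<theta> ^ i = \<theta> ^ i" by (rule c2_eq[OF c])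
    moreover have "\<theta> ^ i * inverse \<theta> ^ i = 1" using tnz by (simp add: power_inverse)
    ultimately have "\<theta> ^ i * \<theta> ^ i = 1" by simp
    hence "\<theta> ^ (2 * i) = 1" by (simp add: mult_2 power_add)
    hence "(n+1) dvd (2 * i)" by (rule prim_dvd[OF p np])
    moreover have "coprime (n+1) 2" using ev by simp
    ultimately have "(n+1) dvd i" using coprime_dvd_mult_right_iff by blast
    hence "n + 1 \<le> i" using i by (intro dvd_imp_le) auto
    thus False using i by simp
  qed
  show ?thesis
  proof
    assume s: "sq B (Suc n) = 0"
    have Bnz: "B \<noteq> 0"
    proof
      assume "B = 0"
      moreover have "Suc n = Suc (2 * (n div 2))" using ev by simp
      ultimately have "sq B (Suc n) = 1" using sq_zero_odd by metis
      thus False using s by simp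
    qed
    have "x ^ Suc n + y ^ Suc n = 0" using sq_closed[OF c xy, of "Suc n"] s Bxy by simp
    hence yx: "y ^ Suc n = x ^ Suc n" by (rule c2_eq[OF c])
    define z where "z = x ^ Suc n"
    have "z * z = x ^ Suc n * y ^ Suc n" by (simp only: z_def yx)
    also have "\<dots> = (x * y) ^ Suc n" by (simp only: power_mult_distrib)
    also have "\<dots> = 1" using xy by simp
    finally have "z * z = 1" .
    hence "(z + 1) * (z + 1) = (z + z) + (1 + 1)" by (simp add: algebra_simps)
    also have "\<dots> = 0" by (simp only: c2_self[OF c] add_0_right)
    finally have "z + 1 = 0" by simp
    hence "z = 1" using c2_eq[OF c, of z 1] by simp
    hence "x ^ (n+1) = 1" by (simp add: z_def)
    then obtain j where j: "j < n + 1" "x = \<theta> ^ j" using prim_roots[OF p np] by blast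
    have j0: "j \<noteq> 0"
    proof
      assume "j = 0"
      hence "x = 1" using j by simp
      hence "B = 1 + 1" using Bxy by (simp add: y_def)
      thus False using c Bnz by simp
    qed
    show "\<exists>i. 1 \<le> i \<and> i \<le> n div 2 \<and> B = \<theta> ^ i + inverse \<theta> ^ i"
    proof (cases "j \<le> n div 2")
      case True
      have "B = \<theta> ^ j + inverse \<theta> ^ j" using Bxy j by (simp add: y_def power_inverse)
      thus ?thesis using True j0 by (intro exI[of _ j]) auto
    next
      case False
      define i where "i = n + 1 - j"
      have ib: "1 \<le> i" "i \<le> n div 2" using False j ev by (auto simp: i_def elim!: evenE)
      have "\<theta> ^ i * \<theta> ^ j = 1" using t1 j by (simp add: i_def power_add[symmetric])
      hence e1: "inverse (\<theta> ^ j) = \<theta> ^ i" "inverse (\<theta> ^ i) = \<theta> ^ j"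
        by (auto intro: inverse_unique simp: mult.commute)
      have "B = \<theta> ^ i + inverse \<theta> ^ i" using Bxy j e1
        by (simp add: y_def power_inverse add.commute)
      thus ?thesis using ib by blast
    qed
  next
    assume "\<exists>i. 1 \<le> i \<and> i \<le> n div 2 \<and> B = \<theta> ^ i + inverse \<theta> ^ i"
    then obtain i where i: "1 \<le> i" "i \<le> n div 2" and Bi: "B = \<theta> ^ i + inverse \<theta> ^ i" by blast
    define pp where "pp = \<theta> ^ i"
    define qq where "qq = inverse \<theta> ^ i"
    have pq: "pp * qq = 1" using tnz by (simp add: pp_def qq_def power_inverse)
    have "(x + pp) * (x + qq) = 1 + B * x + x * x" using pq Bi
      by (simp add: pp_def[symmetric] qq_def[symmetric] algebra_simps)
    hence "(x + pp) * (x + qq) = 0" using x by simp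
    hence "x + pp = 0 \<or> x + qq = 0" by simp
    hence xpq: "x = pp \<or> x = qq" using c2_eq[OF c, of x pp] c2_eq[OF c, of x qq] by auto
    have sw: "(w ^ i) ^ (n+1) = (w ^ (n+1)) ^ i" for w :: 'b
    proof -
      have "(w ^ i) ^ (n+1) = w ^ (i * (n+1))" by (rule power_mult[symmetric])
      also have "\<dots> = w ^ ((n+1) * i)" by (simp only: mult.commute)
      also have "\<dots> = (w ^ (n+1)) ^ i" by (rule power_mult)
      finally show ?thesis .
    qed
    have ppn: "pp ^ (n+1) = 1" using t1 sw[of \<theta>] by (simp add: pp_def)
    have it1: "inverse \<theta> ^ (n+1) = 1" by (metis t1 power_inverse inverse_1)
    have qqn: "qq ^ (n+1) = 1" by (simp only: qq_def sw it1 power_one)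
    have xn: "x ^ Suc n = 1" using xpq ppn qqn by auto
    hence yn: "y ^ Suc n = 1" by (metis y_def power_inverse inverse_1)
    have "sq B (Suc n) * B = 0" using sq_closed[OF c xy, of "Suc n"] xn yn Bxy c by simp
    moreover have "B \<noteq> 0" using nzB[OF i] Bi by simp
    ultimately show "sq B (Suc n) = 0" by simp
  qed
qed

theorem theorem2p3:
  fixes a :: "'a::{finite, field}" and n :: nat and \<theta> :: "'a alg_closure"
  assumes q_pow2: "\<exists>m. (card (UNIV :: 'a set)) = 2 ^ m"
    and n_pos: "n \<ge> 1"
    and cop: "gcd (n + 1) (card (UNIV :: 'a set)) = 1"
    and prim: "primitive_root_of_unity (n + 1) \<theta>"
  shows "even n \<and>
    (is_LCD (2 * n) (Ccode n a) \<longleftrightarrow>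
       to_ac a \<notin> {- 1 + \<theta> ^ i + inverse \<theta> ^ i | i. 1 \<le> i \<and> i \<le> n div 2})"
proof
  have c: "(1::'a) + 1 = 0" using char2[OF q_pow2] .
  have cK: "(1::'a alg_closure) + 1 = 0" using arg_cong[of _ _ to_ac, OF c] by simp
  show ev: "even n" using n_even[OF q_pow2 cop] .
  have "is_LCD (2 * n) (Ccode n a) \<longleftrightarrow> sq (a + 1) (Suc n) \<noteq> 0" by (rule LCD_sq[OF c n_pos])
  also have "sq (a + 1) (Suc n) = 0 \<longleftrightarrow> sq (to_ac a + 1) (Suc n) = 0"
    using to_ac_sq[of "a+1" "Suc n"] by (metis to_ac_add to_ac_1 to_ac_eq_0_iff)
  also have "sq (to_ac a + 1) (Suc n) = 0 \<longleftrightarrow>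
     (\<exists>i. 1 \<le> i \<and> i \<le> n div 2 \<and> to_ac a + 1 = \<theta> ^ i + inverse \<theta> ^ i)"
    by (rule key[OF cK prim ev n_pos])
  also have "(\<exists>i. 1 \<le> i \<and> i \<le> n div 2 \<and> to_ac a + 1 = \<theta> ^ i + inverse \<theta> ^ i) \<longleftrightarrow>
       to_ac a \<in> {- 1 + \<theta> ^ i + inverse \<theta> ^ i | i. 1 \<le> i \<and> i \<le> n div 2}"
  proof -
    have "to_ac a + 1 = t \<longleftrightarrow> to_ac a = -1 + t" for t :: "'a alg_closure"
      by (auto simp: algebra_simps)
    thus ?thesis by (auto simp: add.assoc)
  qed
  finally show "is_LCD (2 * n) (Ccode n a) \<longleftrightarrow>
       to_ac a \<notin> {- 1 + \<theta> ^ i + inverse \<theta> ^ i | i. 1 \<le> i \<and> i \<le> n div 2}" by blast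
qed

end
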